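(* Fix $1<p<\infty$ and an integer $r>1$; let $s=r^{1/p}$, $M=\lfloor\log_2 r\rfloor$ and let $\alpha>0$ satisfy $\alpha^M=s$. Let $(x_n)\subseteq\mathcal N_\alpha$ be a block sequence with $\alpha^{-2}\le\|x_n\|_p\le\alpha^{-1}$ for all $n\in\mathbb N$. Then there is a block sequence $(y_n)\subseteq\mathcal N_\alpha$ of $(x_n)$ (i.e. $y_n=\sum_{i\in F_n}c_ix_i$ for finite sets $F_1<F_2<\dots$ of indices and real scalars $c_i$) such that $\alpha^{-3}\le\|J_my_n\|_p\le 1$ for all $n,m\in\mathbb N$.
   Context: $c_{00}$ = finitely supported real sequences; a block sequence $(x_n)$ means $\max{\rm supp}\,x_n<\min{\rm supp}\,x_{n+1}$. For $\beta>0$ let $C_\beta=\{\pm\beta^j: j\in\mathbb Z\}\cup\{0\}$ and $\mathcal N_\beta=\{x\in c_{00}: x(i)\in C_\beta\ \forall i\}$. For $x\in\mathcal N_\alpha$ and $m\in\mathbb N$, $J_{m,x}=\{i\in{\rm supp}\,x: \alpha^{-m}x(i)\in C_s\}$ and $J_mx$ is the restriction of $x$ to $J_{m,x}$. *)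

theory Defs
  imports Complex_Main
begin

definition supp :: "(nat \<Rightarrow> real) \<Rightarrow> nat set" where
  "supp x = {i. x i \<noteq> 0}"

definition c00 :: "(nat \<Rightarrow> real) set" where
  "c00 = {x. finite (supp x)}"

definition Cset :: "real \<Rightarrow> real set" where
  "Cset \<beta> = {y. \<exists>j::int. y = \<beta> powi j \<or> y = - (\<beta> powi j)} \<union> {0}"

definition Nset :: "real \<Rightarrow> (nat \<Rightarrow> real) set" where
  "Nset \<beta> = {x \<in> c00. \<forall>i. x i \<in> Cset \<beta>}"

definition block_seq :: "(nat \<Rightarrow> nat \<Rightarrow> real) \<Rightarrow> bool" where
  "block_seq x \<longleftrightarrow> (\<forall>n. x n \<in> c00 \<and> x n \<noteq> (\<lambda>_. 0) \<and>
      (\<forall>i\<in>supp (x n). \<forall>j\<in>supp (x (Suc n)). i < j))"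

definition block_seq_of :: "(nat \<Rightarrow> nat \<Rightarrow> real) \<Rightarrow> (nat \<Rightarrow> nat \<Rightarrow> real) \<Rightarrow> bool" where
  "block_seq_of y x \<longleftrightarrow> block_seq y \<and>
     (\<exists>F :: nat \<Rightarrow> nat set. \<exists>c :: nat \<Rightarrow> real.
        (\<forall>n. finite (F n) \<and> F n \<noteq> {} \<and> (\<forall>i\<in>F n. \<forall>j\<in>F (Suc n). i < j)) \<and>
        (\<forall>n. y n = (\<lambda>k. \<Sum>i\<in>F n. c i * x i k)))"

definition lpnorm :: "real \<Rightarrow> (nat \<Rightarrow> real) \<Rightarrow> real" where
  "lpnorm p x = (\<Sum>i\<in>supp x. \<bar>x i\<bar> powr p) powr (1 / p)"

definition Jset :: "real \<Rightarrow> real \<Rightarrow> nat \<Rightarrow> (nat \<Rightarrow> real) \<Rightarrow> nat set" where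
  "Jset \<alpha> s m x = {i \<in> supp x. \<alpha> powi (- int m) * x i \<in> Cset s}"

definition Jop :: "real \<Rightarrow> real \<Rightarrow> nat \<Rightarrow> (nat \<Rightarrow> real) \<Rightarrow> (nat \<Rightarrow> real)" where
  "Jop \<alpha> s m x = (\<lambda>i. if i \<in> Jset \<alpha> s m x then x i else 0)"

end

theory Submission
  imports Defs "HOL-Library.Infinite_Set"
begin


lemma Cset_neg: "(- y \<in> Cset s) = (y \<in> Cset s)"
  unfolding Cset_def by (auto, metis minus_minus)+

lemma Cset_abs: "(\<bar>y\<bar> \<in> Cset s) = (y \<in> Cset s)"
  by (cases "y \<ge> 0") (auto simp: Cset_neg)

lemma Cset_mult:
  assumes "s \<noteq> 0" "y \<in> Cset s"
  shows "s powi k * y \<in> Cset s"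
proof -
  from assms(2) consider "y = 0" | j where "y = s powi j" | j where "y = - (s powi j)"
    unfolding Cset_def by auto
  then show ?thesis
  proof cases
    case 1 then show ?thesis by (simp add: Cset_def)
  next
    case (2 j)
    then have "s powi k * y = s powi (k + j)" using assms(1) by (simp add: power_int_add)
    then show ?thesis unfolding Cset_def by blast
  next
    case (3 j)
    then have "s powi k * y = - (s powi (k + j))" using assms(1) by (simp add: power_int_add)
    then show ?thesis unfolding Cset_def by blast
  qed
qed

lemma Cset_mult_iff:
  assumes "s \<noteq> 0"
  shows "(s powi k * y \<in> Cset s) = (y \<in> Cset s)"
proof
  assume "s powi k * y \<in> Cset s"
  from Cset_mult[OF assms this, of "-k"] show "y \<in> Cset s"
    using assms by (simp add: power_int_minus field_simps)
qed (rule Cset_mult[OF assms])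

lemma powi_inj:
  fixes a :: real
  assumes "a > 1" "a powi m = a powi n"
  shows "m = n"
proof -
  have "a powr real_of_int m = a powr real_of_int n"
    using assms by (simp add: powr_real_of_int')
  then have "real_of_int m = real_of_int n" using assms(1) by (simp add: powr_inj)
  then show ?thesis by simp
qed

lemma Cset_alpha_form:
  assumes "y \<in> Cset a" "y \<noteq> 0"
  shows "\<exists>e. \<bar>y\<bar> = \<bar>a powi e\<bar>"
  using assms unfolding Cset_def by auto

lemma powi_in_Cset_iff:
  fixes a :: real
  assumes "a > 1" "M > 0"
  shows "(a powi e \<in> Cset (a ^ M)) = (int M dvd e)"
proof
  assume "a powi e \<in> Cset (a ^ M)"
  then obtain j where "a powi e = (a^M) powi j \<or> a powi e = - ((a^M) powi j)"
    unfolding Cset_def using assms by auto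
  moreover have "a powi e > 0" "(a^M) powi j > 0" using assms by auto
  ultimately have "a powi e = a powi (int M * j)"
    by (auto simp: power_int_power)
  then have "e = int M * j" using powi_inj assms by blast
  then show "int M dvd e" by simp
next
  assume "int M dvd e"
  then obtain j where "e = int M * j" by auto
  then have "a powi e = (a^M) powi j" by (simp add: power_int_power)
  then show "a powi e \<in> Cset (a ^ M)" unfolding Cset_def by blast
qed



definition Js :: "real \<Rightarrow> real \<Rightarrow> int \<Rightarrow> (nat \<Rightarrow> real) \<Rightarrow> nat set" where
  "Js a s m z = {i \<in> supp z. a powi (-m) * z i \<in> Cset s}"

definition Qm :: "real \<Rightarrow> real \<Rightarrow> real \<Rightarrow> int \<Rightarrow> (nat \<Rightarrow> real) \<Rightarrow> real" where
  "Qm p a s m z = (\<Sum>i\<in>Js a s m z. \<bar>z i\<bar> powr p)"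

lemma Js_supp: "Js a s m z \<subseteq> supp z"
  unfolding Js_def by auto

lemma Jset_Js: "Jset a s m z = Js a s (int m) z"
  unfolding Jset_def Js_def by simp

lemma lp_Jop: "lpnorm p (Jop a s m z) = Qm p a s (int m) z powr (1/p)"
proof -
  have S: "supp (Jop a s m z) = Js a s (int m) z"
    unfolding Jop_def supp_def Jset_Js[symmetric] unfolding Jset_def supp_def by auto
  have V: "\<And>i. i \<in> Js a s (int m) z \<Longrightarrow> Jop a s m z i = z i"
    unfolding Jop_def Jset_Js by simp
  show ?thesis unfolding lpnorm_def Qm_def S using V by simp
qed

lemma Qm_period:
  assumes "a > 0" "s = a ^ M"
  shows "Qm p a s (m + int M * q) z = Qm p a s m z"
proof -
  have "s \<noteq> 0" using assms by simp
  have e1: "a powi (-m) * a powi (int M * (-q)) = a powi (-m + int M * (-q))"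
    by (rule power_int_add[symmetric]) (use assms in simp)
  have e2: "a powi (int M * (-q)) = s powi (-q)" using assms(2) by (simp add: power_int_power)
  have eq: "a powi (- (m + int M * q)) * z i = s powi (-q) * (a powi (-m) * z i)" for i
    using e1 e2 by (simp add: algebra_simps)
  have "(a powi (- (m + int M * q)) * z i \<in> Cset s) = (a powi (-m) * z i \<in> Cset s)" for i
    unfolding eq by (rule Cset_mult_iff[OF \<open>s \<noteq> 0\<close>])
  then have "Js a s (m + int M * q) z = Js a s m z"
    unfolding Js_def by (simp only:)
  then show ?thesis unfolding Qm_def by simp
qed

lemma Qm_mod:
  assumes "a > 0" "s = a ^ M"
  shows "Qm p a s m z = Qm p a s (m mod int M) z"
  using Qm_period[OF assms, of p "m mod int M" "m div int M" z]
  by (metis mod_mult_div_eq mult.commute)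

lemma powi_powr_p:
  assumes "(a::real) > 0"
  shows "(a powi k) powr p = (a powr p) powi k"
proof -
  have "(a powi k) powr p = (a powr real_of_int k) powr p" using assms by (simp add: powr_real_of_int')
  also have "\<dots> = (a powr p) powr real_of_int k" by (simp add: powr_powr mult.commute)
  also have "\<dots> = (a powr p) powi k" using assms by (simp add: powr_real_of_int')
  finally show ?thesis .
qed

lemma Qm_scale:
  assumes "a > 0"
  shows "Qm p a s m (\<lambda>i. a powi k * z i) = (a powr p) powi k * Qm p a s (m - k) z"
proof -
  have sp: "supp (\<lambda>i. a powi k * z i) = supp z" unfolding supp_def using assms by auto
  have "a powi (-m) * (a powi k * z i) = a powi (-(m-k)) * z i" for i
  proof -
    have "a powi (-m) * a powi k = a powi (-m + k)"
      by (rule power_int_add[symmetric]) (use assms in simp)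
    then show ?thesis by (simp add: mult.assoc[symmetric])
  qed
  then have J: "Js a s m (\<lambda>i. a powi k * z i) = Js a s (m - k) z"
    unfolding Js_def sp by (simp only:)
  have "\<bar>a powi k * z i\<bar> powr p = (a powr p) powi k * \<bar>z i\<bar> powr p" for i
    using assms by (simp add: abs_mult powr_mult powi_powr_p)
  then show ?thesis unfolding Qm_def J by (simp add: sum_distrib_left)
qed

lemma Qm_zero: "Qm p a s m (\<lambda>i. 0) = 0"
  unfolding Qm_def Js_def supp_def by simp

lemma Qm_add:
  assumes "finite (supp z1)" "finite (supp z2)" "supp z1 \<inter> supp z2 = {}"
  shows "Qm p a s m (\<lambda>i. z1 i + z2 i) = Qm p a s m z1 + Qm p a s m z2"
proof -
  have dz: "z1 i = 0 \<or> z2 i = 0" for i using assms(3) unfolding supp_def by auto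
  have J: "Js a s m (\<lambda>i. z1 i + z2 i) = Js a s m z1 \<union> Js a s m z2"
    unfolding Js_def supp_def using dz by (auto, (metis add.right_neutral add.left_neutral)+)
  have D: "Js a s m z1 \<inter> Js a s m z2 = {}" using assms(3) Js_supp by blast
  have F: "finite (Js a s m z1)" "finite (Js a s m z2)"
    by (rule finite_subset[OF Js_supp], rule assms)+
  have "Qm p a s m (\<lambda>i. z1 i + z2 i) = (\<Sum>i\<in>Js a s m z1. \<bar>z1 i + z2 i\<bar> powr p) + (\<Sum>i\<in>Js a s m z2. \<bar>z1 i + z2 i\<bar> powr p)"
    unfolding Qm_def J by (rule sum.union_disjoint[OF F D])
  also have "\<dots> = Qm p a s m z1 + Qm p a s m z2"
    unfolding Qm_def
  proof (intro arg_cong2[where f="(+)"] sum.cong refl)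
    fix i assume "i \<in> Js a s m z1" then have "z2 i = 0" using dz Js_supp unfolding supp_def by blast
    then show "\<bar>z1 i + z2 i\<bar> powr p = \<bar>z1 i\<bar> powr p" by simp
  next
    fix i assume "i \<in> Js a s m z2" then have "z1 i = 0" using dz Js_supp unfolding supp_def by blast
    then show "\<bar>z1 i + z2 i\<bar> powr p = \<bar>z2 i\<bar> powr p" by simp
  qed
  finally show ?thesis .
qed

lemma supp_sum: "supp (\<lambda>i. \<Sum>l\<in>L. z l i) \<subseteq> (\<Union>l\<in>L. supp (z l))"
  unfolding supp_def by (auto elim: sum.not_neutral_contains_not_neutral)

lemma Qm_sum:
  assumes "finite L" "\<forall>l\<in>L. finite (supp (z l))"
    "\<forall>l\<in>L. \<forall>l'\<in>L. l \<noteq> l' \<longrightarrow> supp (z l) \<inter> supp (z l') = {}"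
  shows "Qm p a s m (\<lambda>i. \<Sum>l\<in>L. z l i) = (\<Sum>l\<in>L. Qm p a s m (z l))"
  using assms
proof (induction L rule: finite_induct)
  case empty
  then show ?case by (simp add: Qm_zero)
next
  case (insert l L)
  have fs: "finite (supp (\<lambda>i. \<Sum>l\<in>L. z l i))"
    using supp_sum[of z L] insert by (meson finite_UN_I finite_subset insert_iff)
  have ds: "supp (z l) \<inter> supp (\<lambda>i. \<Sum>l\<in>L. z l i) = {}"
    using supp_sum[of z L] insert.prems(2) insert.hyps(2) by fastforce
  have "Qm p a s m (\<lambda>i. \<Sum>l\<in>insert l L. z l i) = Qm p a s m (\<lambda>i. z l i + (\<Sum>l\<in>L. z l i))"
    using insert.hyps by simp
  also have "\<dots> = Qm p a s m (z l) + Qm p a s m (\<lambda>i. \<Sum>l\<in>L. z l i)"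
    using Qm_add[OF _ fs ds] insert.prems by (simp add: eta_contract_eq)
  also have "\<dots> = (\<Sum>l\<in>insert l L. Qm p a s m (z l))"
    using insert by simp
  finally show ?case .
qed

lemma Js_mem_iff:
  assumes "a > 1" "M > 0" "s = a ^ M" "z \<in> Nset a" "i \<in> supp z"
  shows "\<exists>e. \<forall>c. (i \<in> Js a s c z) = (int M dvd (e - c))"
proof -
  have "z i \<in> Cset a" "z i \<noteq> 0" using assms(4,5) unfolding Nset_def supp_def by auto
  then obtain e where e: "\<bar>z i\<bar> = \<bar>a powi e\<bar>" using Cset_alpha_form by blast
  then have e': "\<bar>z i\<bar> = a powi e" using assms(1) by simp
  have "(i \<in> Js a s c z) = (int M dvd (e - c))" for c
  proof -
    have "(i \<in> Js a s c z) = (a powi (-c) * z i \<in> Cset s)" using assms(5) unfolding Js_def by simp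
    also have "\<dots> = (\<bar>a powi (-c) * z i\<bar> \<in> Cset s)" by (simp add: Cset_abs)
    also have "\<bar>a powi (-c) * z i\<bar> = a powi (e - c)"
      using assms(1) e' by (simp add: abs_mult power_int_diff power_int_minus field_simps)
    finally show ?thesis using powi_in_Cset_iff[OF assms(1,2)] assms(3) by simp
  qed
  then show ?thesis by blast
qed

lemma Qm_partition:
  assumes "a > 1" "M > 0" "s = a ^ M" "z \<in> Nset a"
  shows "(\<Sum>c\<in>{0..<int M}. Qm p a s c z) = (\<Sum>i\<in>supp z. \<bar>z i\<bar> powr p)"
proof -
  have fin: "finite (supp z)" using assms(4) unfolding Nset_def c00_def by auto
  have U: "supp z = (\<Union>c\<in>{0..<int M}. Js a s c z)"
  proof
    show "supp z \<subseteq> (\<Union>c\<in>{0..<int M}. Js a s c z)"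
    proof
      fix i assume i: "i \<in> supp z"
      then obtain e where e: "\<forall>c. (i \<in> Js a s c z) = (int M dvd (e - c))"
        using Js_mem_iff[OF assms] by blast
      have "int M dvd (e - e mod int M)" by (simp add: mod_eq_dvd_iff[symmetric])
      then have "i \<in> Js a s (e mod int M) z" using e by blast
      moreover have "e mod int M \<in> {0..<int M}" using assms(2) by simp
      ultimately show "i \<in> (\<Union>c\<in>{0..<int M}. Js a s c z)" by blast
    qed
  qed (use Js_supp in blast)
  have D: "\<forall>c\<in>{0..<int M}. \<forall>c'\<in>{0..<int M}. c \<noteq> c' \<longrightarrow> Js a s c z \<inter> Js a s c' z = {}"
  proof (intro ballI impI)
    fix c c' assume c: "c \<in> {0..<int M}" and c': "c' \<in> {0..<int M}" and ne: "c \<noteq> c'"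
    show "Js a s c z \<inter> Js a s c' z = {}"
    proof (rule ccontr)
      assume "Js a s c z \<inter> Js a s c' z \<noteq> {}"
      then obtain i where i: "i \<in> Js a s c z" "i \<in> Js a s c' z" by blast
      then have "i \<in> supp z" using Js_supp by blast
      then obtain e where e: "\<forall>c. (i \<in> Js a s c z) = (int M dvd (e - c))"
        using Js_mem_iff[OF assms] by blast
      have "e mod int M = c mod int M" "e mod int M = c' mod int M"
        using e i by (simp_all add: mod_eq_dvd_iff)
      then have "c = c'" using c c' by simp
      then show False using ne by simp
    qed
  qed
  have FJ: "\<And>c. finite (Js a s c z)" by (rule finite_subset[OF Js_supp fin])
  have "(\<Sum>i\<in>supp z. \<bar>z i\<bar> powr p) = (\<Sum>c\<in>{0..<int M}. (\<Sum>i\<in>Js a s c z. \<bar>z i\<bar> powr p))"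
    by (subst U, rule sum.UNION_disjoint) (use D FJ in auto)
  then show ?thesis unfolding Qm_def by simp
qed



lemma Qm_nonneg: "0 \<le> Qm p a s m z"
  unfolding Qm_def by (rule sum_nonneg) simp

lemma block_nonzero:
  assumes "block_seq x" shows "\<exists>c. c \<in> supp (x n)"
proof -
  have "x n \<noteq> (\<lambda>_. 0)" using assms unfolding block_seq_def by blast
  then obtain c where "x n c \<noteq> 0" by auto
  then show ?thesis unfolding supp_def by auto
qed

lemma block_order:
  assumes "block_seq x" "i < j" "u \<in> supp (x i)" "v \<in> supp (x j)"
  shows "u < v"
  using assms(2,4)
proof (induction j arbitrary: v)
  case 0 then show ?case by simp
next
  case (Suc j)
  show ?case
  proof (cases "i = j")
    case True
    then show ?thesis using assms(1,3) Suc.prems unfolding block_seq_def by blast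
  next
    case False
    then have "i < j" using Suc.prems by simp
    obtain c where c: "c \<in> supp (x j)" using block_nonzero[OF assms(1)] by blast
    have "u < c" using Suc.IH[OF \<open>i < j\<close> c] .
    moreover have "c < v" using assms(1) c Suc.prems unfolding block_seq_def by blast
    ultimately show ?thesis by simp
  qed
qed

lemma block_disjoint:
  assumes "block_seq x" "i \<noteq> j"
  shows "supp (x i) \<inter> supp (x j) = {}"
proof -
  { fix u assume "u \<in> supp (x i)" "u \<in> supp (x j)"
    then have False using block_order[OF assms(1)] assms(2)
      by (metis less_irrefl nat_neq_iff) }
  then show ?thesis by blast
qed

lemma sum_shift_mod:
  fixes f :: "nat \<Rightarrow> real" and m :: int
  assumes "M > 0"
  shows "(\<Sum>k<M. f (nat ((m + int k) mod int M))) = (\<Sum>c<M. f c)"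
proof -
  define h where "h k = nat ((m + int k) mod int M)" for k
  have inj: "inj_on h {..<M}"
  proof
    fix k k' assume k: "k \<in> {..<M}" and k': "k' \<in> {..<M}" and e: "h k = h k'"
    have "0 \<le> (m + int k) mod int M" "0 \<le> (m + int k') mod int M" using assms by simp_all
    then have "(m + int k) mod int M = (m + int k') mod int M"
      using e unfolding h_def by (simp add: eq_nat_nat_iff)
    then have "int k mod int M = int k' mod int M"
      by (simp add: mod_eq_dvd_iff)
    then show "k = k'" using k k' by simp
  qed
  have img: "h ` {..<M} \<subseteq> {..<M}"
    unfolding h_def using assms by (auto simp: nat_less_iff)
  have eq: "h ` {..<M} = {..<M}" by (rule endo_inj_surj[OF _ img inj]) simp
  have "(\<Sum>c<M. f c) = (\<Sum>c\<in>h ` {..<M}. f c)" using eq by simp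
  also have "\<dots> = (\<Sum>k<M. f (h k))" by (rule sum.reindex[OF inj, unfolded comp_def])
  finally show ?thesis unfolding h_def by simp
qed

lemma Qm_partition_nat:
  assumes "a > 1" "M > 0" "s = a ^ M" "z \<in> Nset a"
  shows "(\<Sum>c<M. Qm p a s (int c) z) = (\<Sum>i\<in>supp z. \<bar>z i\<bar> powr p)"
proof -
  have "(\<Sum>c<M. Qm p a s (int c) z) = (\<Sum>c\<in>int ` {0..<M}. Qm p a s c z)"
    by (subst sum.reindex) (auto simp: lessThan_atLeast0)
  also have "\<dots> = (\<Sum>c\<in>{0..<int M}. Qm p a s c z)"
    by (simp add: image_int_atLeastLessThan)
  finally show ?thesis using Qm_partition[OF assms] by simp
qed



locale setting =
  fixes p a s :: real and M :: nat and x :: "nat \<Rightarrow> nat \<Rightarrow> real"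
  assumes p: "p > 0" and a1: "a > 1" and M: "M > 0" and sM: "s = a ^ M"
    and b2: "a powr p \<ge> 2" and bs: "block_seq x" and xN: "\<And>n. x n \<in> Nset a"
    and mlo: "\<And>n. (a powr p) powi (-2) \<le> (\<Sum>c<M. Qm p a s (int c) (x n))"
    and mhi: "\<And>n. (\<Sum>c<M. Qm p a s (int c) (x n)) \<le> (a powr p) powi (-1)"
begin

abbreviation "bb \<equiv> a powr p"

definition dl where "dl = bb powi (-3) / real M"

definition pat :: "nat \<Rightarrow> nat list" where
  "pat n = map (\<lambda>c. nat \<lfloor>Qm p a s (int c) (x n) / dl\<rfloor>) [0..<M]"

lemma bb_pos: "bb > 0" using a1 by simp

lemma dl_pos: "dl > 0" unfolding dl_def using bb_pos M by simp

lemma M_dl: "real M * dl = bb powi (-3)" unfolding dl_def using M by simp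

lemma Q_le_mass: "c < M \<Longrightarrow> Qm p a s (int c) z \<le> (\<Sum>c<M. Qm p a s (int c) z)"
  by (rule member_le_sum) (auto simp: Qm_nonneg)

lemma pat_fin: "finite (range pat)"
proof -
  define K where "K = nat \<lfloor>bb powi (-1) / dl\<rfloor>"
  have "range pat \<subseteq> {xs. set xs \<subseteq> {0..K} \<and> length xs = M}"
  proof safe
    fix n v assume "v \<in> set (pat n)"
    then obtain c where c: "c < M" "v = nat \<lfloor>Qm p a s (int c) (x n) / dl\<rfloor>"
      unfolding pat_def by auto
    have "Qm p a s (int c) (x n) \<le> bb powi (-1)"
      using Q_le_mass[OF c(1), of "x n"] mhi[of n] by linarith
    then have "Qm p a s (int c) (x n) / dl \<le> bb powi (-1) / dl"
      using dl_pos by (simp add: divide_right_mono)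
    then have "v \<le> K" unfolding c(2) K_def by (intro nat_mono floor_mono)
    then show "v \<in> {0..K}" by simp
  qed (simp add: pat_def)
  moreover have "finite {xs. set xs \<subseteq> {0..K} \<and> length xs = M}"
    by (rule finite_lists_length_eq) simp
  ultimately show ?thesis by (rule finite_subset)
qed

definition pat0 where "pat0 = (SOME P. infinite {n. pat n = P})"
definition AA where "AA = {n. pat n = pat0}"

lemma AA_inf: "infinite AA"
proof -
  obtain P where "infinite (pat -` {P})"
    using inf_img_fin_dom[OF pat_fin infinite_UNIV_nat] by blast
  then have "\<exists>P. infinite {n. pat n = P}" by (auto simp: vimage_def)
  then show ?thesis unfolding AA_def pat0_def by (rule someI_ex)
qed

definition g where "g = enumerate AA"

lemma g_mono: "strict_mono g" unfolding g_def by (rule strict_mono_enumerate[OF AA_inf])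
lemma g_in: "g n \<in> AA" unfolding g_def by (rule enumerate_in_set[OF AA_inf])
lemma g_inj: "inj g" using g_mono strict_mono_imp_inj_on by blast

definition Lc where "Lc c = real (pat0 ! c) * dl"

lemma Lc_nonneg: "Lc c \<ge> 0" unfolding Lc_def using dl_pos by simp

lemma Lc_bounds:
  assumes "j \<in> AA" "c < M"
  shows "Lc c \<le> Qm p a s (int c) (x j)" "Qm p a s (int c) (x j) \<le> Lc c + dl"
proof -
  define q where "q = Qm p a s (int c) (x j)"
  have "pat0 ! c = pat j ! c" using assms(1) unfolding AA_def by simp
  also have "\<dots> = nat \<lfloor>q / dl\<rfloor>" unfolding pat_def q_def using assms(2) by simp
  finally have e: "real (pat0 ! c) = real_of_int \<lfloor>q / dl\<rfloor>"
    using Qm_nonneg dl_pos unfolding q_def by simp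
  have f1: "real_of_int \<lfloor>q / dl\<rfloor> \<le> q / dl" "q / dl < real_of_int \<lfloor>q / dl\<rfloor> + 1" by linarith+
  have "real_of_int \<lfloor>q / dl\<rfloor> * dl \<le> q / dl * dl"
    by (rule mult_right_mono[OF f1(1)]) (use dl_pos in simp)
  then have h1: "real (pat0 ! c) * dl \<le> q" unfolding e using dl_pos by simp
  have "q / dl * dl < (real_of_int \<lfloor>q / dl\<rfloor> + 1) * dl"
    by (rule mult_strict_right_mono[OF f1(2)]) (use dl_pos in simp)
  then have h2: "q < (real (pat0 ! c) + 1) * dl" unfolding e using dl_pos by simp
  note h1 h2
  then show "Lc c \<le> Qm p a s (int c) (x j)" "Qm p a s (int c) (x j) \<le> Lc c + dl"
    unfolding Lc_def q_def by (simp_all add: algebra_simps)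
qed

lemma Lc_sum_hi: "(\<Sum>c<M. Lc c) \<le> bb powi (-1)"
proof -
  have "(\<Sum>c<M. Lc c) \<le> (\<Sum>c<M. Qm p a s (int c) (x (g 0)))"
    using Lc_bounds(1)[OF g_in] by (intro sum_mono) simp
  then show ?thesis using mhi[of "g 0"] by linarith
qed

lemma Lc_sum_lo: "bb powi (-2) - bb powi (-3) \<le> (\<Sum>c<M. Lc c)"
proof -
  have "(\<Sum>c<M. Qm p a s (int c) (x (g 0)) - dl) \<le> (\<Sum>c<M. Lc c)"
  proof (rule sum_mono)
    fix c assume "c \<in> {..<M}"
    then have "Qm p a s (int c) (x (g 0)) \<le> Lc c + dl" using Lc_bounds(2)[OF g_in] by simp
    then show "Qm p a s (int c) (x (g 0)) - dl \<le> Lc c" by simp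
  qed
  then have "(\<Sum>c<M. Qm p a s (int c) (x (g 0))) - real M * dl \<le> (\<Sum>c<M. Lc c)"
    by (simp add: sum_subtractf)
  then show ?thesis using mlo[of "g 0"] M_dl by linarith
qed

definition nk where "nk k = nat \<lceil>bb ^ k\<rceil>"
definition Nmax where "Nmax = nat \<lceil>bb ^ M\<rceil>"
definition T where "T = M * Nmax"
definition pos where "pos n kt = n * T + fst kt * Nmax + snd kt"
definition S where "S = (SIGMA k:{..<M}. {..<nk k})"

lemma bb_ge1: "bb \<ge> 1" using b2 by simp

lemma nk_real: "real (nk k) = of_int \<lceil>bb ^ k\<rceil>"
  unfolding nk_def using bb_pos by simp

lemma nk_pos: "nk k \<ge> 1"
proof -
  have "bb ^ k \<ge> 1" using bb_ge1 by simp
  then have "\<lceil>bb ^ k\<rceil> \<ge> 1" by linarith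
  then have "nat \<lceil>bb ^ k\<rceil> \<ge> nat 1" by (rule nat_mono)
  then show ?thesis unfolding nk_def by simp
qed

lemma nk_le: "k < M \<Longrightarrow> nk k \<le> Nmax"
  unfolding nk_def Nmax_def
  by (intro nat_mono ceiling_mono power_increasing) (use bb_ge1 in auto)

lemma Nmax_pos: "Nmax > 0" using nk_le[OF M] nk_pos[of 0] by simp

lemma weight:
  assumes "k < M"
  shows "1 \<le> real (nk k) * bb powi (- int k)" "real (nk k) * bb powi (- int k) \<le> 3/2"
proof -
  have bk: "bb ^ k > 0" using bb_pos by simp
  have c1: "bb ^ k \<le> real (nk k)" "real (nk k) < bb ^ k + 1"
    unfolding nk_real by linarith+
  have w: "real (nk k) * bb powi (- int k) = real (nk k) / bb ^ k"
    by (simp add: power_int_minus field_simps)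
  show "1 \<le> real (nk k) * bb powi (- int k)" unfolding w using c1 bk by simp
  show "real (nk k) * bb powi (- int k) \<le> 3/2"
  proof (cases "k = 0")
    case True then show ?thesis by (simp add: nk_def)
  next
    case False
    then have "bb ^ k \<ge> bb ^ 1" using bb_ge1 by (intro power_increasing) auto
    then have "bb ^ k \<ge> 2" using b2 by simp
    then have "real (nk k) \<le> 3/2 * bb ^ k" using c1 by linarith
    then show ?thesis unfolding w using bk by (simp add: field_simps)
  qed
qed

end


lemma supp_scale: "supp (\<lambda>i. c * z i) \<subseteq> supp z"
  unfolding supp_def by auto

context setting
begin

lemma S_fin: "finite S" unfolding S_def by simp

lemma S_mem: "kt \<in> S \<longleftrightarrow> fst kt < M \<and> snd kt < nk (fst kt)"
  unfolding S_def by (cases kt) auto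

lemma S_00: "(0, 0) \<in> S" using S_mem M nk_pos[of 0] by simp

lemma S_inner: "kt \<in> S \<Longrightarrow> fst kt * Nmax + snd kt < T"
proof -
  assume "kt \<in> S"
  then have k: "fst kt < M" and t: "snd kt < Nmax" using S_mem nk_le
    by (auto intro: less_le_trans)
  have "fst kt * Nmax + snd kt < fst kt * Nmax + Nmax" using t by simp
  also have "\<dots> = Suc (fst kt) * Nmax" by simp
  also have "\<dots> \<le> M * Nmax" using k by (intro mult_right_mono) auto
  finally show ?thesis unfolding T_def .
qed

lemma S_snd: "kt \<in> S \<Longrightarrow> snd kt < Nmax"
  using S_mem nk_le by (auto intro: less_le_trans)

lemma pos_rem:
  assumes "kt \<in> S"
  shows "pos n kt mod T = fst kt * Nmax + snd kt" "(pos n kt mod T) div Nmax = fst kt"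
    "(pos n kt mod T) mod Nmax = snd kt"
proof -
  have "pos n kt = (fst kt * Nmax + snd kt) + n * T" unfolding pos_def by simp
  then show 1: "pos n kt mod T = fst kt * Nmax + snd kt"
    using S_inner[OF assms] by simp
  show "(pos n kt mod T) div Nmax = fst kt" unfolding 1 using S_snd[OF assms] by simp
  show "(pos n kt mod T) mod Nmax = snd kt" unfolding 1 using S_snd[OF assms] by simp
qed

lemma pos_inj: "inj_on (pos n) S"
proof
  fix kt kt' assume "kt \<in> S" "kt' \<in> S" "pos n kt = pos n kt'"
  then have "fst kt = fst kt'" "snd kt = snd kt'" using pos_rem by metis+
  then show "kt = kt'" by (simp add: prod_eq_iff)
qed

lemma pos_less:
  assumes "kt \<in> S" "kt' \<in> S"
  shows "pos n kt < pos (Suc n) kt'"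
proof -
  have "pos n kt < n * T + T" unfolding pos_def using S_inner[OF assms(1)] by simp
  also have "\<dots> \<le> pos (Suc n) kt'" unfolding pos_def by simp
  finally show ?thesis .
qed

lemma x_fin: "finite (supp (x j))" using xN[of j] unfolding Nset_def c00_def by simp

lemma xs_disj:
  assumes "kt \<in> S" "kt' \<in> S" "kt \<noteq> kt'"
  shows "supp (x (g (pos n kt))) \<inter> supp (x (g (pos n kt'))) = {}"
proof -
  have "pos n kt \<noteq> pos n kt'" using pos_inj assms unfolding inj_on_def by blast
  then have "g (pos n kt) \<noteq> g (pos n kt')" using g_inj unfolding inj_def by blast
  then show ?thesis by (rule block_disjoint[OF bs])
qed

definition yy where "yy n = (\<lambda>i. \<Sum>kt\<in>S. a powi (- int (fst kt)) * x (g (pos n kt)) i)"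

lemma yy_val:
  assumes "kt \<in> S" "i \<in> supp (x (g (pos n kt)))"
  shows "yy n i = a powi (- int (fst kt)) * x (g (pos n kt)) i"
proof -
  have z: "x (g (pos n kt')) i = 0" if "kt' \<in> S - {kt}" for kt'
    using xs_disj[OF assms(1), of kt' n] that assms(2) unfolding supp_def by auto
  have "yy n i = a powi (- int (fst kt)) * x (g (pos n kt)) i
      + (\<Sum>kt'\<in>S - {kt}. a powi (- int (fst kt')) * x (g (pos n kt')) i)"
    unfolding yy_def by (rule sum.remove[OF S_fin assms(1)])
  also have "(\<Sum>kt'\<in>S - {kt}. a powi (- int (fst kt')) * x (g (pos n kt')) i) = 0"
    by (rule sum.neutral) (simp add: z)
  finally show ?thesis by simp
qed

lemma yy_zero:
  assumes "\<forall>kt\<in>S. i \<notin> supp (x (g (pos n kt)))"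
  shows "yy n i = 0"
  unfolding yy_def using assms unfolding supp_def by (intro sum.neutral) auto

lemma yy_supp: "supp (yy n) \<subseteq> (\<Union>kt\<in>S. supp (x (g (pos n kt))))"
  using yy_zero unfolding supp_def by blast

lemma yy_fin: "finite (supp (yy n))"
  by (rule finite_subset[OF yy_supp]) (use S_fin x_fin in blast)

lemma yy_N: "yy n \<in> Nset a"
proof -
  have "yy n i \<in> Cset a" for i
  proof (cases "\<exists>kt\<in>S. i \<in> supp (x (g (pos n kt)))")
    case True
    then obtain kt where kt: "kt \<in> S" "i \<in> supp (x (g (pos n kt)))" by blast
    have "x (g (pos n kt)) i \<in> Cset a" using xN unfolding Nset_def by blast
    then show ?thesis unfolding yy_val[OF kt] using a1 by (intro Cset_mult) auto
  next
    case False
    then have "yy n i = 0" using yy_zero[of i n] by blast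
    then show ?thesis unfolding Cset_def by simp
  qed
  then show ?thesis unfolding Nset_def c00_def using yy_fin by auto
qed

lemma yy_nonzero: "yy n \<noteq> (\<lambda>_. 0)"
proof -
  obtain i where i: "i \<in> supp (x (g (pos n (0,0))))" using block_nonzero[OF bs] by blast
  have "yy n i = x (g (pos n (0,0))) i" using yy_val[OF S_00 i] by simp
  then have "yy n i \<noteq> 0" using i unfolding supp_def by simp
  then show ?thesis by metis
qed

lemma yy_order:
  assumes "u \<in> supp (yy n)" "v \<in> supp (yy (Suc n))"
  shows "u < v"
proof -
  obtain kt where kt: "kt \<in> S" "u \<in> supp (x (g (pos n kt)))" using yy_supp assms(1) by blast
  obtain kt' where kt': "kt' \<in> S" "v \<in> supp (x (g (pos (Suc n) kt')))" using yy_supp assms(2) by blast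
  have "g (pos n kt) < g (pos (Suc n) kt')" using g_mono pos_less[OF kt(1) kt'(1)]
    by (simp add: strict_mono_less)
  then show ?thesis using block_order[OF bs _ kt(2) kt'(2)] by simp
qed

lemma yy_block: "block_seq yy"
  unfolding block_seq_def using yy_N yy_nonzero yy_order unfolding Nset_def by blast

lemma yy_of: "block_seq_of yy x"
proof -
  define F where "F n = (g \<circ> pos n) ` S" for n
  define c where "c i = a powi (- int ((inv g i mod T) div Nmax))" for i
  have inj: "inj_on (g \<circ> pos n) S" for n
    using g_inj pos_inj by (simp add: comp_inj_on inj_on_subset)
  have P1: "finite (F n) \<and> F n \<noteq> {} \<and> (\<forall>i\<in>F n. \<forall>j\<in>F (Suc n). i < j)" for n
  proof (intro conjI ballI)
    show "finite (F n)" unfolding F_def using S_fin by simp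
    show "F n \<noteq> {}" unfolding F_def using S_00 by blast
    fix i j assume "i \<in> F n" "j \<in> F (Suc n)"
    then obtain kt kt' where "kt \<in> S" "kt' \<in> S" "i = g (pos n kt)" "j = g (pos (Suc n) kt')"
      unfolding F_def by auto
    then show "i < j" using g_mono pos_less by (simp add: strict_mono_less)
  qed
  have P2: "yy n = (\<lambda>k. \<Sum>i\<in>F n. c i * x i k)" for n
  proof
    fix k
    have "(\<Sum>i\<in>F n. c i * x i k) = (\<Sum>kt\<in>S. c (g (pos n kt)) * x (g (pos n kt)) k)"
      unfolding F_def by (subst sum.reindex[OF inj]) simp
    also have "\<dots> = yy n k"
      unfolding yy_def
    proof (rule sum.cong[OF refl])
      fix kt assume "kt \<in> S"
      then show "c (g (pos n kt)) * x (g (pos n kt)) k = a powi (- int (fst kt)) * x (g (pos n kt)) k"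
        unfolding c_def using pos_rem inv_f_f[OF g_inj] by simp
    qed
    finally show "yy n k = (\<Sum>i\<in>F n. c i * x i k)" by simp
  qed
  show ?thesis unfolding block_seq_of_def using yy_block P1 P2 by blast
qed

end


context setting
begin

lemma yy_Q: "Qm p a s m (yy n) =
   (\<Sum>kt\<in>S. bb powi (- int (fst kt)) * Qm p a s (m + int (fst kt)) (x (g (pos n kt))))"
proof -
  define zf where "zf kt = (\<lambda>i. a powi (- int (fst kt)) * x (g (pos n kt)) i)" for kt
  have yz: "yy n = (\<lambda>i. \<Sum>kt\<in>S. zf kt i)" unfolding yy_def zf_def by simp
  have fz: "\<forall>kt\<in>S. finite (supp (zf kt))"
    unfolding zf_def using supp_scale x_fin finite_subset by blast
  have dz: "\<forall>kt\<in>S. \<forall>kt'\<in>S. kt \<noteq> kt' \<longrightarrow> supp (zf kt) \<inter> supp (zf kt') = {}"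
    unfolding zf_def using xs_disj supp_scale by blast
  have "Qm p a s m (yy n) = (\<Sum>kt\<in>S. Qm p a s m (zf kt))"
    unfolding yz by (rule Qm_sum[OF S_fin fz dz])
  also have "\<dots> = (\<Sum>kt\<in>S. bb powi (- int (fst kt)) * Qm p a s (m + int (fst kt)) (x (g (pos n kt))))"
    unfolding zf_def using a1 by (intro sum.cong refl) (simp add: Qm_scale)
  finally show ?thesis .
qed

definition qq where "qq m k = nat ((m + int k) mod int M)"

lemma qq_lt: "qq m k < M" unfolding qq_def using M by (simp add: nat_less_iff)

lemma term_bounds:
  "Lc (qq m k) \<le> Qm p a s (m + int k) (x (g j))"
  "Qm p a s (m + int k) (x (g j)) \<le> Lc (qq m k) + dl"
proof -
  have "Qm p a s (m + int k) (x (g j)) = Qm p a s ((m + int k) mod int M) (x (g j))"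
    using a1 sM by (intro Qm_mod) auto
  also have "\<dots> = Qm p a s (int (qq m k)) (x (g j))"
    unfolding qq_def using M by simp
  finally have e: "Qm p a s (m + int k) (x (g j)) = Qm p a s (int (qq m k)) (x (g j))" .
  show "Lc (qq m k) \<le> Qm p a s (m + int k) (x (g j))"
    unfolding e by (rule Lc_bounds(1)[OF g_in qq_lt])
  show "Qm p a s (m + int k) (x (g j)) \<le> Lc (qq m k) + dl"
    unfolding e by (rule Lc_bounds(2)[OF g_in qq_lt])
qed

lemma sum_S: "(\<Sum>kt\<in>S. f (fst kt)) = (\<Sum>k<M. real (nk k) * f k)"
proof -
  have "(\<Sum>kt\<in>S. f (fst kt)) = (\<Sum>k<M. \<Sum>t<nk k. f k)"
    unfolding S_def by (subst sum.Sigma) (auto simp: split_beta)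
  then show ?thesis by simp
qed

lemma bb_facts: "bb powi (-1) \<le> 1/2" "bb powi (-3) \<le> 1/8" "bb powi (-3) \<le> bb powi (-2) - bb powi (-3)"
proof -
  have b: "bb \<ge> 2" by (rule b2)
  have b3: "bb ^ 3 \<ge> 8" using power_mono[OF b, of 3] by simp
  show "bb powi (-1) \<le> 1/2" using b bb_pos by (simp add: power_int_minus field_simps)
  have "bb ^ 3 > 0" using bb_pos by simp
  then show "bb powi (-3) \<le> 1/8" using b3 by (simp add: power_int_minus field_simps)
  have e: "bb powi (-2) = bb * bb powi (-3)"
    using bb_pos by (simp add: power_int_minus power3_eq_cube power2_eq_square field_simps)
  have "2 * bb powi (-3) \<le> bb * bb powi (-3)" using b bb_pos by (intro mult_right_mono) auto
  then show "bb powi (-3) \<le> bb powi (-2) - bb powi (-3)" unfolding e by linarith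
qed

lemma yy_lo: "bb powi (-3) \<le> Qm p a s m (yy n)"
proof -
  have "(\<Sum>c<M. Lc c) = (\<Sum>k<M. Lc (qq m k))"
    unfolding qq_def by (rule sum_shift_mod[OF M, symmetric])
  also have "\<dots> \<le> (\<Sum>k<M. real (nk k) * (bb powi (- int k) * Lc (qq m k)))"
  proof (rule sum_mono)
    fix k assume "k \<in> {..<M}"
    then have "1 \<le> real (nk k) * bb powi (- int k)" using weight by simp
    then have "1 * Lc (qq m k) \<le> (real (nk k) * bb powi (- int k)) * Lc (qq m k)"
      using Lc_nonneg by (intro mult_right_mono) auto
    then show "Lc (qq m k) \<le> real (nk k) * (bb powi (- int k) * Lc (qq m k))" by simp
  qed
  also have "\<dots> = (\<Sum>kt\<in>S. bb powi (- int (fst kt)) * Lc (qq m (fst kt)))"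
    by (rule sum_S[symmetric])
  also have "\<dots> \<le> Qm p a s m (yy n)"
    unfolding yy_Q
    by (intro sum_mono mult_left_mono term_bounds) (use bb_pos in simp)
  finally show ?thesis using Lc_sum_lo bb_facts by linarith
qed

lemma yy_hi: "Qm p a s m (yy n) \<le> 1"
proof -
  have "Qm p a s m (yy n) \<le> (\<Sum>kt\<in>S. bb powi (- int (fst kt)) * (Lc (qq m (fst kt)) + dl))"
    unfolding yy_Q
    by (intro sum_mono mult_left_mono term_bounds) (use bb_pos in simp)
  also have "\<dots> = (\<Sum>k<M. real (nk k) * (bb powi (- int k) * (Lc (qq m k) + dl)))"
    by (rule sum_S)
  also have "\<dots> \<le> (\<Sum>k<M. 3/2 * (Lc (qq m k) + dl))"
  proof (rule sum_mono)
    fix k assume "k \<in> {..<M}"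
    then have "real (nk k) * bb powi (- int k) \<le> 3/2" using weight by simp
    then have "(real (nk k) * bb powi (- int k)) * (Lc (qq m k) + dl) \<le> 3/2 * (Lc (qq m k) + dl)"
      using Lc_nonneg dl_pos by (intro mult_right_mono) (auto simp: add_nonneg_nonneg less_imp_le)
    then show "real (nk k) * (bb powi (- int k) * (Lc (qq m k) + dl)) \<le> 3/2 * (Lc (qq m k) + dl)"
      by (simp add: mult.assoc)
  qed
  also have "\<dots> = 3/2 * ((\<Sum>k<M. Lc (qq m k)) + real M * dl)"
    by (subst sum_distrib_left[symmetric]) (simp add: sum.distrib)
  also have "(\<Sum>k<M. Lc (qq m k)) = (\<Sum>c<M. Lc c)"
    unfolding qq_def by (rule sum_shift_mod[OF M])
  finally have "Qm p a s m (yy n) \<le> 3 / 2 * ((\<Sum>c<M. Lc c) + real M * dl)" .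
  moreover have "(\<Sum>c<M. Lc c) + real M * dl \<le> 5/8" using Lc_sum_hi bb_facts M_dl by linarith
  then have "3 / 2 * ((\<Sum>c<M. Lc c) + real M * dl) \<le> 3/2 * (5/8)" by (rule mult_left_mono) simp
  ultimately show ?thesis by simp
qed

end


theorem mainTheorem6:
  fixes p \<alpha> s :: real and r M :: nat and x :: "nat \<Rightarrow> nat \<Rightarrow> real"
  assumes "1 < p"
    and "r > 1"
    and "s = real r powr (1 / p)"
    and "M = nat \<lfloor>log 2 (real r)\<rfloor>"
    and "\<alpha> > 0" and "\<alpha> ^ M = s"
    and "block_seq x" and "\<forall>n. x n \<in> Nset \<alpha>"
    and "\<forall>n. \<alpha> powi (-2) \<le> lpnorm p (x n) \<and> lpnorm p (x n) \<le> \<alpha> powi (-1)"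
  shows "\<exists>y :: nat \<Rightarrow> nat \<Rightarrow> real. block_seq_of y x \<and> (\<forall>n. y n \<in> Nset \<alpha>) \<and>
           (\<forall>n. \<forall>m\<ge>1. \<alpha> powi (-3) \<le> lpnorm p (Jop \<alpha> s m (y n)) \<and>
                        lpnorm p (Jop \<alpha> s m (y n)) \<le> 1)"
proof -
  note A = assms
  have p0: "p > 0" using A(1) by simp
  have r2: "real r \<ge> 2" using A(2) by simp
  have lg: "log 2 (real r) \<ge> 1" using r2 by simp
  have M1: "M > 0" using A(4) lg by linarith
  have s1: "s > 1"
  proof -
    have "1 powr (1/p) < real r powr (1/p)" using A(2) p0 by (intro powr_less_mono2) auto
    then show ?thesis using A(3) by simp
  qed
  have a1: "\<alpha> > 1"
  proof (rule ccontr)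
    assume "\<not> \<alpha> > 1"
    then have "\<alpha> ^ M \<le> 1" using A(5) by (intro power_le_one) auto
    then show False using A(6) s1 by simp
  qed
  define B where "B = \<alpha> powr p"
  have BM: "B ^ M = real r"
  proof -
    have "B ^ M = \<alpha> powr (real M * p)" unfolding B_def using A(5) by (simp add: powr_power)
    also have "\<dots> = (\<alpha> powr real M) powr p" by (simp add: powr_powr)
    also have "\<dots> = s powr p" using A(5,6) by (simp add: powr_realpow)
    also have "\<dots> = real r" using A(3) p0 by (simp add: powr_powr)
    finally show ?thesis .
  qed
  have twoM: "2 ^ M \<le> real r"
  proof -
    have "real M \<le> log 2 (real r)" using A(4) lg by linarith
    then have "2 powr real M \<le> real r" using r2 by (subst (asm) le_log_iff) auto
    then show ?thesis by (simp add: powr_realpow)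
  qed
  have b2: "B \<ge> 2"
  proof -
    obtain M' where M': "M = Suc M'" using M1 by (cases M) auto
    have "2 ^ Suc M' \<le> B ^ Suc M'" using twoM BM M' by simp
    then show ?thesis by (rule power_le_imp_le_base) (simp add: B_def)
  qed
  have mass: "(\<Sum>c<M. Qm p \<alpha> s (int c) (x n)) = lpnorm p (x n) powr p" for n
  proof -
    have S0: "(\<Sum>i\<in>supp (x n). \<bar>x n i\<bar> powr p) \<ge> 0" by (rule sum_nonneg) simp
    have "(\<Sum>c<M. Qm p \<alpha> s (int c) (x n)) = (\<Sum>i\<in>supp (x n). \<bar>x n i\<bar> powr p)"
      using Qm_partition_nat[OF a1 M1 A(6)[symmetric]] A(8) by blast
    also have "\<dots> = lpnorm p (x n) powr p"
      unfolding lpnorm_def using p0 S0 by (simp add: powr_powr powr_one)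
    finally show ?thesis .
  qed
  have lpnn: "lpnorm p z \<ge> 0" for z unfolding lpnorm_def by simp
  have mlo: "B powi (-2) \<le> (\<Sum>c<M. Qm p \<alpha> s (int c) (x n))" for n
  proof -
    have "(\<alpha> powi (-2)) powr p \<le> lpnorm p (x n) powr p"
      using A(9) A(5) p0 by (intro powr_mono2) auto
    moreover have "(\<alpha> powi (-2)) powr p = B powi (-2)" unfolding B_def by (rule powi_powr_p[OF A(5)])
    ultimately show ?thesis unfolding mass by linarith
  qed
  have mhi: "(\<Sum>c<M. Qm p \<alpha> s (int c) (x n)) \<le> B powi (-1)" for n
  proof -
    have "lpnorm p (x n) powr p \<le> (\<alpha> powi (-1)) powr p"
      using A(9) lpnn p0 by (intro powr_mono2) auto
    moreover have "(\<alpha> powi (-1)) powr p = B powi (-1)" unfolding B_def by (rule powi_powr_p[OF A(5)])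
    ultimately show ?thesis unfolding mass by linarith
  qed
  interpret setting p \<alpha> s M x
    by unfold_locales (use p0 a1 M1 A(6) b2 A(7) A(8) mlo mhi in \<open>auto simp: B_def\<close>)
  have Br: "B powr (1/p) = \<alpha>" unfolding B_def using p0 A(5) by (simp add: powr_powr)
  show ?thesis
  proof (intro exI conjI allI impI)
    show "block_seq_of yy x" by (rule yy_of)
    fix n show "yy n \<in> Nset \<alpha>" by (rule yy_N)
  next
    fix n m :: nat
    have q0: "0 \<le> Qm p \<alpha> s (int m) (yy n)" by (rule Qm_nonneg)
    have lo: "B powi (-3) \<le> Qm p \<alpha> s (int m) (yy n)" using yy_lo unfolding B_def .
    have hi: "Qm p \<alpha> s (int m) (yy n) \<le> 1" by (rule yy_hi)
    have "(B powi (-3)) powr (1/p) \<le> Qm p \<alpha> s (int m) (yy n) powr (1/p)"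
      using lo p0 B_def a1 by (intro powr_mono2) auto
    moreover have "(B powi (-3)) powr (1/p) = \<alpha> powi (-3)"
    proof -
      have Bpos: "B > 0" unfolding B_def using a1 by simp
      have "(B powi (-3)) powr (1/p) = (B powr (1/p)) powi (-3)" by (rule powi_powr_p[OF Bpos])
      then show ?thesis using Br by simp
    qed
    ultimately show "\<alpha> powi (-3) \<le> lpnorm p (Jop \<alpha> s m (yy n))" unfolding lp_Jop by simp
    have "Qm p \<alpha> s (int m) (yy n) powr (1/p) \<le> 1 powr (1/p)"
      using hi q0 p0 by (intro powr_mono2) auto
    then show "lpnorm p (Jop \<alpha> s m (yy n)) \<le> 1" unfolding lp_Jop by simp
  qed
qed


end
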